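(* Let $d\ge 1$, $n_1,\dots,n_d\ge 1$, $R\ge 1$, and let $\bm{U}_p\in\mathbb{R}^{n_p\times R}$ for $p=1,\dots,d$. Let $\mathcal{A}\in\mathbb{R}^{n_1\times\cdots\times n_d}$ be the CP tensor $$\mathcal{A}=\sum_{r=1}^R \bm{U}_1(:,r)\circ\bm{U}_2(:,r)\circ\cdots\circ\bm{U}_d(:,r),\quad\text{i.e.}\quad \mathcal{A}(i_1,\dots,i_d)=\sum_{r=1}^R\prod_{p=1}^d \bm{U}_p(i_p,r).$$ Let $1\le k\le \prod_{p=1}^d n_p$. Consider the optimization problem over matrices $\bm{X}_p\in\mathbb{R}^{n_p\times k}$, $p=1,\dots,d$: $$\max\ \sum_{j=1}^k\sum_{r=1}^R\prod_{p=1}^d\langle \bm{X}_p(:,j),\,\bm{U}_p(:,r)*\bm{X}_p(:,j)\rangle$$ subject to $\|\bm{X}_p(:,j)\|_2=1$ for all $p=1,\dots,d$ and $j=1,\dots,k$, and $$\prod_{p=1}^d\langle \bm{X}_p(:,i),\bm{X}_p(:,j)\rangle=\begin{cases}1,& i=j,\\ 0,& i\ne j,\end{cases}\qquad i,j=1,\dots,k.$$ Then retrieving the $k$ largest elements of $\mathcal{A}$ is equivalent to solving this problem: its maximum value equals the sum of the $k$ largest entries of $\mathcal{A}$ (counted with multiplicity over the $\prod_p n_p$ positions), and it is attained by choosing distinct multi-indices $(i^{(j)}_1,\dots,i^{(j)}_d)$, $j=1,\dots,k$, at which the $k$ largest entries of $\mathcal{A}$ occur and setting $\bm{X}_p(:,j)=\bm{e}_{i^{(j)}_p}$,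 the $i^{(j)}_p$-th standard basis vector of $\mathbb{R}^{n_p}$.
   Context: $\circ$ denotes the vector outer product, $*$ the entrywise (Hadamard) product of vectors, and $\langle\cdot,\cdot\rangle$ the Euclidean inner product; thus $\langle \bm{x},\bm{u}*\bm{x}\rangle=\sum_{l}\bm{u}(l)\bm{x}(l)^2$. $\bm{X}(:,j)$ denotes the $j$-th column of a matrix $\bm{X}$. The paper states the theorem informally as "retrieving the $k$ largest elements of $\mathcal{A}$ is equivalent to solving the continuous constrained optimization problem"; the precise sense stated here (optimal value equals the sum of the $k$ largest entries, attained at standard basis vectors located at those entries) is the meaning of that equivalence. *)

theory Defs
  imports Complex_Main "HOL-Library.FuncSet"
begin

text \<open>Conventions: all indices are 0-based. A matrix U_p in R^(n_p x R) is
  U p i r (i < n p, r < R); a matrix X_p in R^(n_p x k) is X p l j (l < n p, j < k).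
  Multi-indices are functions idx on {0..<d} with idx p < n p (extensional).\<close>

definition positions :: "nat \<Rightarrow> (nat \<Rightarrow> nat) \<Rightarrow> (nat \<Rightarrow> nat) set" where
  "positions d n = PiE {0..<d} (\<lambda>p. {0..<n p})"

definition cp_entry :: "nat \<Rightarrow> nat \<Rightarrow> (nat \<Rightarrow> nat \<Rightarrow> nat \<Rightarrow> real) \<Rightarrow> (nat \<Rightarrow> nat) \<Rightarrow> real" where
  "cp_entry d R U idx = (\<Sum>r<R. \<Prod>p<d. U p (idx p) r)"

definition topk_sum :: "nat \<Rightarrow> (nat \<Rightarrow> nat) \<Rightarrow> nat \<Rightarrow> (nat \<Rightarrow> nat \<Rightarrow> nat \<Rightarrow> real) \<Rightarrow> nat \<Rightarrow> real" where
  "topk_sum d n R U k = Max {(\<Sum>idx\<in>S. cp_entry d R U idx) | S. S \<subseteq> positions d n \<and> card S = k}"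

definition col_inner :: "(nat \<Rightarrow> nat) \<Rightarrow> (nat \<Rightarrow> nat \<Rightarrow> nat \<Rightarrow> real) \<Rightarrow> nat \<Rightarrow> nat \<Rightarrow> nat \<Rightarrow> real" where
  "col_inner n X p i j = (\<Sum>l<n p. X p l i * X p l j)"

definition objective :: "nat \<Rightarrow> (nat \<Rightarrow> nat) \<Rightarrow> nat \<Rightarrow> (nat \<Rightarrow> nat \<Rightarrow> nat \<Rightarrow> real) \<Rightarrow> nat \<Rightarrow> (nat \<Rightarrow> nat \<Rightarrow> nat \<Rightarrow> real) \<Rightarrow> real" where
  "objective d n R U k X = (\<Sum>j<k. \<Sum>r<R. \<Prod>p<d. (\<Sum>l<n p. X p l j * (U p l r * X p l j)))"

definition feasible :: "nat \<Rightarrow> (nat \<Rightarrow> nat) \<Rightarrow> nat \<Rightarrow> (nat \<Rightarrow> nat \<Rightarrow> nat \<Rightarrow> real) \<Rightarrow> bool" where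
  "feasible d n k X \<longleftrightarrow>
     (\<forall>p<d. \<forall>j<k. sqrt (col_inner n X p j j) = 1) \<and>
     (\<forall>i<k. \<forall>j<k. (\<Prod>p<d. col_inner n X p i j) = (if i = j then 1 else 0))"

definition topk_selection :: "nat \<Rightarrow> (nat \<Rightarrow> nat) \<Rightarrow> nat \<Rightarrow> (nat \<Rightarrow> nat \<Rightarrow> nat \<Rightarrow> real) \<Rightarrow> nat \<Rightarrow> (nat \<Rightarrow> nat \<Rightarrow> nat) \<Rightarrow> bool" where
  "topk_selection d n R U k sel \<longleftrightarrow>
     (\<forall>j<k. sel j \<in> positions d n) \<and> inj_on sel {0..<k} \<and>
     (\<forall>b\<in>positions d n - sel ` {0..<k}. \<forall>j<k. cp_entry d R U b \<le> cp_entry d R U (sel j))"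

definition basis_choice :: "(nat \<Rightarrow> nat \<Rightarrow> nat) \<Rightarrow> nat \<Rightarrow> nat \<Rightarrow> nat \<Rightarrow> real" where
  "basis_choice sel p l j = (if l = sel j p then 1 else 0)"

end

theory Submission imports Defs begin

lemma exch:
  fixes f :: "nat \<Rightarrow> nat \<Rightarrow> real"
  shows "(\<Prod>p<d. \<Sum>l<n p. f p l) = (\<Sum>idx\<in>positions d n. \<Prod>p<d. f p (idx p))"
  unfolding positions_def
  using prod_sum_PiE[of "{0..<d}" "\<lambda>p. {0..<n p}" f]
  by (simp add: lessThan_atLeast0)

lemma finite_positions: "finite (positions d n)"
  unfolding positions_def by (simp add: finite_PiE)

lemma knapsack:
  fixes A W :: "(nat \<Rightarrow> nat) \<Rightarrow> real" and P S :: "(nat \<Rightarrow> nat) set"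
  assumes fin: "finite P" and SP: "S \<subseteq> P" and cS: "card S = k" and k: "k \<ge> 1"
    and top: "\<forall>b\<in>P - S. \<forall>a\<in>S. A b \<le> A a"
    and W0: "\<forall>x\<in>P. 0 \<le> W x" and W1: "\<forall>x\<in>P. W x \<le> 1"
    and Ws: "(\<Sum>x\<in>P. W x) = k"
  shows "(\<Sum>x\<in>P. W x * A x) \<le> (\<Sum>x\<in>S. A x)"
proof -
  have finS: "finite S" using fin SP finite_subset by blast
  have ne: "S \<noteq> {}" using cS k by auto
  define t where "t = Min (A ` S)"
  have tS: "\<forall>a\<in>S. t \<le> A a" unfolding t_def using finS by auto
  have tO: "\<forall>b\<in>P - S. A b \<le> t"
  proof
    fix b assume b: "b \<in> P - S"
    have "t \<in> A ` S" unfolding t_def using finS ne by simp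
    then show "A b \<le> t" using top b by auto
  qed
  have split: "(\<Sum>x\<in>P. W x * A x) = (\<Sum>x\<in>S. W x * A x) + (\<Sum>x\<in>P - S. W x * A x)"
    using fin SP by (metis sum.subset_diff add.commute)
  have s1: "(\<Sum>x\<in>S. W x * A x) \<le> (\<Sum>x\<in>S. A x + (W x - 1) * t)"
  proof (rule sum_mono)
    fix x assume x: "x \<in> S"
    have "(W x - 1) * A x \<le> (W x - 1) * t"
      using W1 x SP tS by (intro mult_left_mono_neg) auto
    then show "W x * A x \<le> A x + (W x - 1) * t" by (simp add: algebra_simps)
  qed
  have s2: "(\<Sum>x\<in>P - S. W x * A x) \<le> (\<Sum>x\<in>P - S. W x * t)"
    using W0 tO by (intro sum_mono mult_left_mono) auto
  have "(\<Sum>x\<in>S. A x + (W x - 1) * t) + (\<Sum>x\<in>P - S. W x * t)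
      = (\<Sum>x\<in>S. A x) + t * ((\<Sum>x\<in>S. W x) + (\<Sum>x\<in>P - S. W x) - card S)"
    by (simp add: sum.distrib sum_subtractf algebra_simps sum_distrib_left sum_distrib_right)
  also have "(\<Sum>x\<in>S. W x) + (\<Sum>x\<in>P - S. W x) = (\<Sum>x\<in>P. W x)"
    using fin SP by (metis sum.subset_diff add.commute)
  finally show ?thesis using split s1 s2 Ws cS by simp
qed

lemma topk_exists:
  fixes A :: "'a \<Rightarrow> real"
  assumes "finite P" "k \<le> card P"
  shows "\<exists>S. S \<subseteq> P \<and> card S = k \<and> (\<forall>b\<in>P - S. \<forall>a\<in>S. A b \<le> A a)"
  using assms(2)
proof (induction k)
  case 0 then show ?case by auto
next
  case (Suc k)
  then obtain S where S: "S \<subseteq> P" "card S = k" "\<forall>b\<in>P - S. \<forall>a\<in>S. A b \<le> A a" by auto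
  have finS: "finite S" using S(1) assms(1) finite_subset by blast
  have "card S < card P" using S Suc.prems by simp
  hence ne: "P - S \<noteq> {}" using S(1) by auto
  have fD: "finite (P - S)" using assms(1) by simp
  obtain a where a: "a \<in> P - S" "\<forall>b\<in>P - S. A b \<le> A a"
  proof -
    have "Max (A ` (P - S)) \<in> A ` (P - S)" using fD ne by simp
    then obtain a where "a \<in> P - S" "A a = Max (A ` (P - S))" by auto
    moreover have "\<forall>b\<in>P - S. A b \<le> Max (A ` (P - S))" using fD by simp
    ultimately show ?thesis using that by auto
  qed
  show ?case
  proof (intro exI[of _ "insert a S"] conjI)
    show "insert a S \<subseteq> P" using a S by auto
    show "card (insert a S) = Suc k" using a S finS by simp
    show "\<forall>b\<in>P - insert a S. \<forall>c\<in>insert a S. A b \<le> A c" using a S by auto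
  qed
qed

lemma bessel:
  fixes T :: "nat \<Rightarrow> 'a \<Rightarrow> real"
  assumes fin: "finite P" and e: "e \<in> P"
    and orth: "\<forall>i<k. \<forall>j<k. (\<Sum>x\<in>P. T i x * T j x) = (if i = j then 1 else 0)"
  shows "(\<Sum>j<k. (T j e)^2) \<le> 1"
proof -
  define c where "c j = T j e" for j
  define s where "s x = (\<Sum>j<k. c j * T j x)" for x
  define dl where "dl x = (if x = e then 1 else (0::real))" for x
  have "0 \<le> (\<Sum>x\<in>P. (dl x - s x)^2)" by (simp add: sum_nonneg)
  also have "\<dots> = (\<Sum>x\<in>P. dl x ^2) - 2 * (\<Sum>x\<in>P. dl x * s x) + (\<Sum>x\<in>P. (s x)^2)"
    by (simp add: power2_diff sum.distrib sum_subtractf sum_distrib_left algebra_simps)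
  also have "(\<Sum>x\<in>P. dl x ^2) = (\<Sum>x\<in>P. dl x)" by (intro sum.cong) (auto simp: dl_def)
  also have "(\<Sum>x\<in>P. dl x) = 1" using fin e by (simp add: dl_def)
  also have "(\<Sum>x\<in>P. dl x * s x) = (\<Sum>x\<in>P. if x = e then s x else 0)" by (intro sum.cong) (auto simp: dl_def)
  also have "\<dots> = s e" using fin e by simp
  also have "s e = (\<Sum>j<k. (c j)^2)" by (simp add: s_def c_def power2_eq_square)
  also have "(\<Sum>x\<in>P. (s x)^2) = (\<Sum>i<k. \<Sum>j<k. c i * c j * (\<Sum>x\<in>P. T i x * T j x))"
  proof -
    have "(\<Sum>x\<in>P. (s x)^2) = (\<Sum>x\<in>P. \<Sum>i<k. \<Sum>j<k. c i * c j * (T i x * T j x))"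
      unfolding s_def power2_eq_square sum_product by (simp add: algebra_simps)
    also have "\<dots> = (\<Sum>i<k. \<Sum>x\<in>P. \<Sum>j<k. c i * c j * (T i x * T j x))"
      by (rule sum.swap)
    also have "\<dots> = (\<Sum>i<k. \<Sum>j<k. \<Sum>x\<in>P. c i * c j * (T i x * T j x))"
      by (intro sum.cong refl) (rule sum.swap)
    finally show ?thesis by (simp add: sum_distrib_left)
  qed
  also have "\<dots> = (\<Sum>i<k. \<Sum>j<k. c i * c j * (if i = j then 1 else 0))"
    using orth by (intro sum.cong refl) auto
  also have "\<dots> = (\<Sum>j<k. (c j)^2)" by (simp add: power2_eq_square if_distrib cong: if_cong)
  finally show ?thesis by (simp add: c_def)
qed

lemma topk_value:
  assumes k: "1 \<le> k" and SP: "S \<subseteq> positions d n" and cS: "card S = k"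
    and top: "\<forall>b\<in>positions d n - S. \<forall>a\<in>S. cp_entry d R U b \<le> cp_entry d R U a"
  shows "topk_sum d n R U k = (\<Sum>x\<in>S. cp_entry d R U x)"
proof -
  let ?P = "positions d n" and ?A = "cp_entry d R U"
  have fin: "finite ?P" by (rule finite_positions)
  have eq: "{(\<Sum>idx\<in>S. ?A idx) | S. S \<subseteq> ?P \<and> card S = k} = (\<lambda>S. \<Sum>idx\<in>S. ?A idx) ` {S. S \<subseteq> ?P \<and> card S = k}"
    by auto
  have finM: "finite {S. S \<subseteq> ?P \<and> card S = k}" using fin
    by (rule finite_subset[rotated, OF finite_Pow_iff[THEN iffD2]]) auto
  show ?thesis unfolding topk_sum_def eq
  proof (rule Max_eqI)
    show "finite ((\<lambda>S. \<Sum>idx\<in>S. ?A idx) ` {S. S \<subseteq> ?P \<and> card S = k})" using finM by simp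
    show "(\<Sum>x\<in>S. ?A x) \<in> (\<lambda>S. \<Sum>idx\<in>S. ?A idx) ` {S. S \<subseteq> ?P \<and> card S = k}"
      using SP cS by auto
  next
    fix y assume "y \<in> (\<lambda>S. \<Sum>idx\<in>S. ?A idx) ` {S. S \<subseteq> ?P \<and> card S = k}"
    then obtain S' where S': "S' \<subseteq> ?P" "card S' = k" "y = (\<Sum>idx\<in>S'. ?A idx)" by auto
    define W where "W x = (if x \<in> S' then 1 else (0::real))" for x
    have "(\<Sum>x\<in>?P. W x * ?A x) \<le> (\<Sum>x\<in>S. ?A x)"
      apply (rule knapsack[OF fin SP cS k top])
      using S' fin by (auto simp: W_def sum.If_cases Int_absorb1)
    moreover have "(\<Sum>x\<in>?P. W x * ?A x) = (\<Sum>x\<in>?P. if x \<in> S' then ?A x else 0)"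
      by (intro sum.cong) (auto simp: W_def)
    moreover have "\<dots> = y"
      using S' fin by (simp add: sum.If_cases Int_absorb1)
    ultimately show "y \<le> (\<Sum>x\<in>S. ?A x)" by simp
  qed
qed


lemma upper:
  assumes feas: "feasible d n k X"
  defines "T \<equiv> (\<lambda>j idx. \<Prod>p<d. X p (idx p) j)"
  shows "objective d n R U k X = (\<Sum>idx\<in>positions d n. (\<Sum>j<k. (T j idx)^2) * cp_entry d R U idx)"
    and "\<forall>i<k. \<forall>j<k. (\<Sum>x\<in>positions d n. T i x * T j x) = (if i = j then 1 else 0)"
proof -
  let ?P = "positions d n"
  have "objective d n R U k X = (\<Sum>j<k. \<Sum>r<R. \<Sum>idx\<in>?P. \<Prod>p<d. X p (idx p) j * (U p (idx p) r * X p (idx p) j))"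
    unfolding objective_def by (simp add: exch)
  also have "\<dots> = (\<Sum>j<k. \<Sum>r<R. \<Sum>idx\<in>?P. (T j idx)^2 * (\<Prod>p<d. U p (idx p) r))"
    unfolding T_def power2_eq_square by (simp add: prod.distrib[symmetric] algebra_simps)
  also have "\<dots> = (\<Sum>j<k. \<Sum>idx\<in>?P. \<Sum>r<R. (T j idx)^2 * (\<Prod>p<d. U p (idx p) r))"
    by (intro sum.cong refl) (rule sum.swap)
  also have "\<dots> = (\<Sum>idx\<in>?P. \<Sum>j<k. \<Sum>r<R. (T j idx)^2 * (\<Prod>p<d. U p (idx p) r))"
    by (rule sum.swap)
  also have "\<dots> = (\<Sum>idx\<in>?P. (\<Sum>j<k. (T j idx)^2) * cp_entry d R U idx)"
    by (simp add: cp_entry_def sum_distrib_left sum_distrib_right sum.swap[of _ "{..<k}"])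
  finally show "objective d n R U k X = (\<Sum>idx\<in>?P. (\<Sum>j<k. (T j idx)^2) * cp_entry d R U idx)" .
  show "\<forall>i<k. \<forall>j<k. (\<Sum>x\<in>?P. T i x * T j x) = (if i = j then 1 else 0)"
  proof (intro allI impI)
    fix i j assume ij: "i < k" "j < k"
    have "(\<Sum>x\<in>?P. T i x * T j x) = (\<Sum>x\<in>?P. \<Prod>p<d. X p (x p) i * X p (x p) j)"
      unfolding T_def by (simp add: prod.distrib)
    also have "\<dots> = (\<Prod>p<d. col_inner n X p i j)"
      unfolding col_inner_def by (simp add: exch)
    finally show "(\<Sum>x\<in>?P. T i x * T j x) = (if i = j then 1 else 0)"
      using feas ij unfolding feasible_def by simp
  qed
qed

lemma basis_inner:
  assumes "sel i \<in> positions d n" "sel j \<in> positions d n" "p < d"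
  shows "col_inner n (basis_choice sel) p i j = (if sel i p = sel j p then 1 else 0)"
proof -
  have lt: "sel i p < n p" using assms unfolding positions_def by (auto simp: PiE_iff)
  have "col_inner n (basis_choice sel) p i j = (\<Sum>l<n p. if l = sel i p then (if sel i p = sel j p then 1 else 0) else 0)"
    unfolding col_inner_def basis_choice_def by (intro sum.cong) auto
  also have "\<dots> = (if sel i p = sel j p then 1 else 0)" using lt by simp
  finally show ?thesis .
qed

lemma basis_feasible:
  assumes "topk_selection d n R U k sel"
  shows "feasible d n k (basis_choice sel)"
proof -
  have inP: "\<forall>j<k. sel j \<in> positions d n" and inj: "inj_on sel {0..<k}"
    using assms unfolding topk_selection_def by auto
  have A: "\<forall>p<d. \<forall>j<k. sqrt (col_inner n (basis_choice sel) p j j) = 1"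
    using inP basis_inner[of sel _ d n _ _] by simp
  have B: "(\<Prod>p<d. col_inner n (basis_choice sel) p i j) = (if i = j then 1 else 0)"
    if ij: "i < k" "j < k" for i j
  proof -
    have "(\<Prod>p<d. col_inner n (basis_choice sel) p i j) = (\<Prod>p<d. if sel i p = sel j p then 1 else 0)"
      using inP ij basis_inner[of sel i d n j] by (intro prod.cong) auto
    also have "\<dots> = (if \<forall>p<d. sel i p = sel j p then 1 else 0)"
    proof (cases "\<forall>p<d. sel i p = sel j p")
      case True then show ?thesis by simp
    next
      case False
      then obtain p where "p < d" "sel i p \<noteq> sel j p" by auto
      then show ?thesis by (simp add: prod_zero_iff) blast
    qed
    also have "(\<forall>p<d. sel i p = sel j p) \<longleftrightarrow> sel i = sel j"
    proof
      assume h: "\<forall>p<d. sel i p = sel j p"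
      show "sel i = sel j"
        using inP ij h unfolding positions_def by (intro PiE_ext[of _ "{0..<d}" "\<lambda>p. {0..<n p}"]) auto
    qed simp
    also have "sel i = sel j \<longleftrightarrow> i = j" using inj ij by (auto simp: inj_on_def)
    finally show ?thesis .
  qed
  show ?thesis unfolding feasible_def using A B by auto
qed

lemma basis_objective:
  assumes "topk_selection d n R U k sel"
  shows "objective d n R U k (basis_choice sel) = (\<Sum>x\<in>sel ` {0..<k}. cp_entry d R U x)"
proof -
  have inP: "\<forall>j<k. sel j \<in> positions d n" and inj: "inj_on sel {0..<k}"
    using assms unfolding topk_selection_def by auto
  have e: "(\<Sum>l<n p. basis_choice sel p l j * (U p l r * basis_choice sel p l j)) = U p (sel j p) r"
    if "j < k" "p < d" for j p r
  proof -
    have lt: "sel j p < n p" using inP that unfolding positions_def by (auto simp: PiE_iff)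
    have "(\<Sum>l<n p. basis_choice sel p l j * (U p l r * basis_choice sel p l j))
        = (\<Sum>l<n p. if l = sel j p then U p (sel j p) r else 0)"
      unfolding basis_choice_def by (intro sum.cong) auto
    then show ?thesis using lt by simp
  qed
  have "objective d n R U k (basis_choice sel) = (\<Sum>j<k. cp_entry d R U (sel j))"
    unfolding objective_def cp_entry_def using e by (intro sum.cong refl prod.cong) auto
  also have "\<dots> = (\<Sum>x\<in>sel ` {0..<k}. cp_entry d R U x)"
    using inj by (simp add: sum.reindex lessThan_atLeast0)
  finally show ?thesis .
qed


theorem theorem1:
  fixes d R k :: nat and n :: "nat \<Rightarrow> nat" and U :: "nat \<Rightarrow> nat \<Rightarrow> nat \<Rightarrow> real"
  assumes "d \<ge> 1" and "\<forall>p<d. n p \<ge> 1" and "R \<ge> 1"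
    and "1 \<le> k" and "k \<le> (\<Prod>p<d. n p)"
  shows "(\<forall>X. feasible d n k X \<longrightarrow> objective d n R U k X \<le> topk_sum d n R U k)
       \<and> (\<exists>X. feasible d n k X \<and> objective d n R U k X = topk_sum d n R U k)
       \<and> (\<exists>sel. topk_selection d n R U k sel)
       \<and> (\<forall>sel. topk_selection d n R U k sel \<longrightarrow>
              feasible d n k (basis_choice sel) \<and>
              objective d n R U k (basis_choice sel) = topk_sum d n R U k)"
proof -
  let ?P = "positions d n" and ?A = "cp_entry d R U"
  have fin: "finite ?P" by (rule finite_positions)
  have cardP: "card ?P = (\<Prod>p<d. n p)"
    unfolding positions_def by (simp add: card_PiE lessThan_atLeast0)
  obtain S where S: "S \<subseteq> ?P" "card S = k" "\<forall>b\<in>?P - S. \<forall>a\<in>S. ?A b \<le> ?A a"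
    using topk_exists[OF fin, of k ?A] assms(5) cardP by auto
  have tv: "topk_sum d n R U k = (\<Sum>x\<in>S. ?A x)"
    using topk_value[OF assms(4) S] .
  have finS: "finite S" using S(1) fin finite_subset by blast
  have P1: "\<forall>X. feasible d n k X \<longrightarrow> objective d n R U k X \<le> topk_sum d n R U k"
  proof (intro allI impI)
    fix X assume feas: "feasible d n k X"
    define T where "T = (\<lambda>j idx. \<Prod>p<d. X p (idx p) j)"
    have up1: "objective d n R U k X = (\<Sum>idx\<in>?P. (\<Sum>j<k. (T j idx)^2) * ?A idx)"
      using upper(1)[OF feas] unfolding T_def .
    have up2: "\<forall>i<k. \<forall>j<k. (\<Sum>x\<in>?P. T i x * T j x) = (if i = j then 1 else 0)"
      using upper(2)[OF feas] unfolding T_def .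
    note up = up1 up2
    define W where "W idx = (\<Sum>j<k. (T j idx)^2)" for idx
    have "(\<Sum>x\<in>?P. W x * ?A x) \<le> (\<Sum>x\<in>S. ?A x)"
    proof (rule knapsack[OF fin S(1) S(2) assms(4) S(3)])
      show "\<forall>x\<in>?P. 0 \<le> W x" by (simp add: W_def sum_nonneg)
      show "\<forall>x\<in>?P. W x \<le> 1" unfolding W_def using bessel[OF fin _ up(2)] by blast
      have "(\<Sum>x\<in>?P. W x) = (\<Sum>j<k. \<Sum>x\<in>?P. T j x * T j x)"
        unfolding W_def power2_eq_square by (rule sum.swap)
      also have "\<dots> = (\<Sum>j<k. 1)" using up(2) by (intro sum.cong) auto
      finally show "(\<Sum>x\<in>?P. W x) = real k" by simp
    qed
    then show "objective d n R U k X \<le> topk_sum d n R U k"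
      using up(1) tv by (simp add: W_def)
  qed
  obtain h where h: "bij_betw h {0..<card S} S" using ex_bij_betw_nat_finite[OF finS] by blast
  have sel: "topk_selection d n R U k h"
  proof -
    have hS: "\<forall>j<k. h j \<in> S" using h S(2) by (auto simp: bij_betw_def)
    have hk: "h ` {0..<k} = S" using h S(2) by (simp add: bij_betw_def)
    moreover have "inj_on h {0..<k}" using h S(2) by (simp add: bij_betw_def)
    moreover have "\<forall>b\<in>?P - h ` {0..<k}. \<forall>j<k. ?A b \<le> ?A (h j)"
    proof (intro ballI allI impI)
      fix b j assume b: "b \<in> ?P - h ` {0..<k}" and j: "j < k"
      have "b \<in> ?P - S" using b hk by simp
      then show "?A b \<le> ?A (h j)" using S(3) hS j by blast
    qed
    ultimately show ?thesis unfolding topk_selection_def using hS S(1) by blast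
  qed
  have P4: "\<forall>sel. topk_selection d n R U k sel \<longrightarrow>
              feasible d n k (basis_choice sel) \<and>
              objective d n R U k (basis_choice sel) = topk_sum d n R U k"
  proof (intro allI impI conjI)
    fix sel assume ts: "topk_selection d n R U k sel"
    show "feasible d n k (basis_choice sel)" by (rule basis_feasible[OF ts])
    have inP: "\<forall>j<k. sel j \<in> ?P" and inj: "inj_on sel {0..<k}"
      and top: "\<forall>b\<in>?P - sel ` {0..<k}. \<forall>j<k. ?A b \<le> ?A (sel j)"
      using ts unfolding topk_selection_def by auto
    have "topk_sum d n R U k = (\<Sum>x\<in>sel ` {0..<k}. ?A x)"
      by (rule topk_value[OF assms(4)]) (use inP inj top in \<open>auto simp: card_image\<close>)
    then show "objective d n R U k (basis_choice sel) = topk_sum d n R U k"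
      using basis_objective[OF ts] by simp
  qed
  show ?thesis using P1 P4 sel by blast
qed

end
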